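(* Let $C=2$, $k_1,k_2\ge 1$, and let $w^*_{1,1},\dots,w^*_{1,k_1},w^*_{2,1},\dots,w^*_{2,k_2}\in\mathbb{R}^d/\mathbb{R}\mathbf{1}$. Let $$\mathcal{B}=\{x\in\mathbb{R}^d/\mathbb{R}\mathbf{1}:\ d_{\rm tr}(x,-w^*_{1,i})=d_{\rm tr}(x,-w^*_{2,j})\text{ for some } i\in[k_1],\ j\in[k_2]\}.$$ Then $\mathcal{B}$ contains no full-dimensional cell (i.e. has empty interior in $\mathbb{R}^d/\mathbb{R}\mathbf{1}\cong\mathbb{R}^{d-1}$) if and only if for every $i\in[k_1]$ and $j\in[k_2]$ the pair $w^*_{1,i},w^*_{2,j}$ is in weak general position.
   Context: The tropical projective torus is $\mathbb{R}^d/\mathbb{R}\mathbf{1}$, $\mathbf{1}=(1,\dots,1)$, identified with $\mathbb{R}^{d-1}$ via $x\mapsto(x_2-x_1,\dots,x_d-x_1)$. Tropical metric: $d_{\rm tr}(x,y)=\max_{i}(x_i-y_i)-\min_i(x_i-y_i)$. A tropical ball $B_x(r)=\{y:d_{\rm tr}(x,y)\le r\}$ is a classical polytope whose facets lie in hyperplanes of the form $\{y: y_a-y_b=\text{const}\}$, $a\ne b$. A pair of points $p,q\in\mathbb{R}^d/\mathbb{R}\mathbf{1}$ is in weak general position (with respect to the tropical ball) if they do not lie in a common hyperplane parallel to a facet of a tropical ball, i.e. $p_a-p_b\neq q_a-q_b$ for all $a\neq b$ in $[d]$. $[k]=\{1,\dots,k\}$. *)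

theory Defs
  imports "HOL-Analysis.Analysis"
begin

text \<open>Points of the tropical projective torus R^d / R1 are represented by
representatives in real^'d; all notions below are invariant under adding
multiples of the all-ones vector.\<close>

definition trop_dist :: "real ^ 'd \<Rightarrow> real ^ 'd \<Rightarrow> real" where
  "trop_dist x y = Max (range (\<lambda>i. x $ i - y $ i)) - Min (range (\<lambda>i. x $ i - y $ i))"

definition weak_general_position :: "real ^ 'd \<Rightarrow> real ^ 'd \<Rightarrow> bool" where
  "weak_general_position p q \<longleftrightarrow> (\<forall>a b. a \<noteq> b \<longrightarrow> p $ a - p $ b \<noteq> q $ a - q $ b)"

text \<open>The set B (as a subset of R^d, i.e. the full preimage of the set in the torus).\<close>
definition bisector_set :: "nat \<Rightarrow> nat \<Rightarrow> (nat \<Rightarrow> real ^ 'd) \<Rightarrow> (nat \<Rightarrow> real ^ 'd) \<Rightarrow> (real ^ 'd) set" where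
  "bisector_set k1 k2 w1 w2 = {x. \<exists>i\<in>{1..k1}. \<exists>j\<in>{1..k2}. trop_dist x (- w1 i) = trop_dist x (- w2 j)}"

end

theory Submission
  imports Defs
begin

lemma fin_range: "finite (range (h :: 'd::finite \<Rightarrow> real))" by simp

lemma max_range_ge: "h k \<le> Max (range (h :: 'd::finite \<Rightarrow> real))"
  by (simp add: Max_ge)

lemma min_range_le: "Min (range (h :: 'd::finite \<Rightarrow> real)) \<le> h k"
  by (simp add: Min_le)

lemma max_range_le: "(\<And>k. h k \<le> c) \<Longrightarrow> Max (range (h :: 'd::finite \<Rightarrow> real)) \<le> c"
  by (simp add: Max_le_iff)

lemma min_range_ge: "(\<And>k. c \<le> h k) \<Longrightarrow> c \<le> Min (range (h :: 'd::finite \<Rightarrow> real))"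
  by (simp add: Min_ge_iff)

lemma trop_dist_eq:
  fixes x y :: "real ^ 'd"
  assumes "\<And>k. x$k - y$k \<le> x$p - y$p" "\<And>k. x$q - y$q \<le> x$k - y$k"
  shows "trop_dist x y = (x$p - y$p) - (x$q - y$q)"
proof -
  have "Max (range (\<lambda>i. x $ i - y $ i)) = x$p - y$p"
    using max_range_le[of "\<lambda>i. x $ i - y $ i"] max_range_ge[of "\<lambda>i. x $ i - y $ i" p] assms(1)
    by (meson order_antisym)
  moreover have "Min (range (\<lambda>i. x $ i - y $ i)) = x$q - y$q"
    using min_range_ge[of _ "\<lambda>i. x $ i - y $ i"] min_range_le[of "\<lambda>i. x $ i - y $ i" q] assms(2)
    by (meson order_antisym)
  ultimately show ?thesis unfolding trop_dist_def by simp
qed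

lemma comp_dist: "\<bar>x$k - y$k\<bar> \<le> dist x (y :: real^'d)"
  using component_le_norm_cart[of "x - y" k] by (simp add: dist_norm)

lemma trop_dist_lip:
  fixes x x' y :: "real ^ 'd"
  shows "\<bar>trop_dist x y - trop_dist x' y\<bar> \<le> 2 * dist x x'"
proof -
  let ?h = "\<lambda>i. x $ i - y $ i" and ?g = "\<lambda>i. x' $ i - y $ i"
  have b: "\<bar>?h k - ?g k\<bar> \<le> dist x x'" for k using comp_dist[of x k x'] by simp
  have 1: "Max (range ?h) \<le> Max (range ?g) + dist x x'"
    by (rule max_range_le) (smt (verit) b max_range_ge)
  have 2: "Max (range ?g) \<le> Max (range ?h) + dist x x'"
    by (rule max_range_le) (smt (verit) b max_range_ge)
  have 3: "Min (range ?h) - dist x x' \<le> Min (range ?g)"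
    by (rule min_range_ge) (smt (verit) b min_range_le)
  have 4: "Min (range ?g) - dist x x' \<le> Min (range ?h)"
    by (rule min_range_ge) (smt (verit) b min_range_le)
  show ?thesis unfolding trop_dist_def using 1 2 3 4 by linarith
qed

lemma trop_dist_cont: "continuous_on UNIV (\<lambda>x::real^'d. trop_dist x y)"
proof (rule lipschitz_on_continuous_on)
  show "2-lipschitz_on UNIV (\<lambda>x::real^'d. trop_dist x y)"
    by (rule lipschitz_onI) (auto simp: dist_real_def trop_dist_lip)
qed


lemma norm_axis_real: "norm (axis i (t::real)) = \<bar>t\<bar>"
proof -
  have "axis i t = t *\<^sub>R axis i (1::real)" by (simp add: axis_def vec_eq_iff)
  then show ?thesis by simp
qed

lemma perturb:
  fixes w x :: "real ^ 'd"
  assumes e: "e > 0" and card: "CARD('d) \<ge> 2"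
  shows "\<exists>x' \<rho> p q. \<rho> > 0 \<and> p \<noteq> q \<and> ball x' \<rho> \<subseteq> ball x e \<and>
     (\<forall>y\<in>ball x' \<rho>. trop_dist y (- w) = (y$p + w$p) - (y$q + w$q))"
proof -
  define u where "u k = x$k + w$k" for k
  have "Max (range u) \<in> range u" by (rule Max_in) auto
  then obtain p where p: "u p = Max (range u)" by (auto simp: image_iff)
  have "Min (range u) \<in> range u" by (rule Min_in) auto
  then obtain q0 where q0: "u q0 = Min (range u)" by (auto simp: image_iff)
  have pmax: "u k \<le> u p" for k using p max_range_ge by metis
  have q0min: "u q0 \<le> u k" for k using q0 min_range_le by metis
  obtain q where pq: "p \<noteq> q" and qmin: "\<And>k. u q \<le> u k"
  proof (cases "q0 = p")
    case True
    have "\<exists>q. q \<noteq> p"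
    proof (rule ccontr)
      assume "\<not> (\<exists>q. q \<noteq> p)"
      then have "UNIV = {p}" by auto
      then have "card (UNIV::'d set) = card {p}" by (rule arg_cong)
      then show False using card by simp
    qed
    then obtain q where "q \<noteq> p" by blast
    moreover have "u q \<le> u k" for k using pmax[of q] q0min[of k] True by simp
    ultimately show ?thesis using that by metis
  next
    case False then show ?thesis using that q0min by metis
  qed
  define \<delta> where "\<delta> = e / 4"
  define x' where "x' = x + axis p \<delta> - axis q \<delta>"
  have x'c: "x'$k = x$k + (if k = p then \<delta> else 0) - (if k = q then \<delta> else 0)" for k
    by (simp add: x'_def axis_def)
  have "dist x x' \<le> 2 * \<delta>"
  proof -
    have "dist x x' = norm (axis p \<delta> - axis q \<delta>)" by (simp add: x'_def dist_norm norm_minus_commute)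
    also have "\<dots> \<le> norm (axis p \<delta>) + norm (axis q \<delta>)" by (rule norm_triangle_ineq4)
    also have "\<dots> = 2 * \<delta>" using e by (simp add: norm_axis_real \<delta>_def)
    finally show ?thesis .
  qed
  have sub: "ball x' (\<delta>/2) \<subseteq> ball x e"
  proof
    fix z assume "z \<in> ball x' (\<delta>/2)"
    then have "dist x' z < \<delta>/2" by simp
    moreover have "dist x z \<le> dist x x' + dist x' z" by (rule dist_triangle)
    ultimately show "z \<in> ball x e" using \<open>dist x x' \<le> 2 * \<delta>\<close> e by (simp add: \<delta>_def)
  qed
  have val: "trop_dist y (- w) = (y$p + w$p) - (y$q + w$q)" if y: "y \<in> ball x' (\<delta>/2)" for y
  proof -
    have yb: "\<bar>y$k - x'$k\<bar> \<le> \<delta>/2" for k using comp_dist[of y k x'] y by (simp add: dist_commute)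
    have A: "y$k - (-w)$k \<le> y$p - (-w)$p" for k
    proof -
      have "y$k + w$k \<le> y$p + w$p"
      proof (cases "k = p")
        case False
        have "x'$k \<le> x$k" using x'c[of k] False e by (simp add: \<delta>_def)
        moreover have "x'$p \<ge> x$p + \<delta>" using x'c[of p] pq by simp
        ultimately show ?thesis using yb[of k] yb[of p] pmax[of k] unfolding u_def by linarith
      qed simp
      then show ?thesis by simp
    qed
    have B: "y$q - (-w)$q \<le> y$k - (-w)$k" for k
    proof -
      have "y$q + w$q \<le> y$k + w$k"
      proof (cases "k = q")
        case False
        have "x'$k \<ge> x$k" using x'c[of k] False e by (simp add: \<delta>_def)
        moreover have "x'$q \<le> x$q - \<delta>" using x'c[of q] pq by simp
        ultimately show ?thesis using yb[of k] yb[of q] qmin[of k] unfolding u_def by linarith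
      qed simp
      then show ?thesis by simp
    qed
    show ?thesis using trop_dist_eq[OF A B] by simp
  qed
  show ?thesis
    apply (rule exI[of _ x'], rule exI[of _ "\<delta>/2"], rule exI[of _ p], rule exI[of _ q])
    using sub val pq e by (auto simp: \<delta>_def)
qed


lemma pair_interior:
  fixes a b :: "real ^ 'd"
  assumes card: "CARD('d) \<ge> 2" and wgp: "weak_general_position a b"
  shows "interior {x. trop_dist x (-a) = trop_dist x (-b)} = {}"
proof (rule ccontr)
  assume "interior {x. trop_dist x (-a) = trop_dist x (-b)} \<noteq> {}"
  then obtain x0 where "x0 \<in> interior {x. trop_dist x (-a) = trop_dist x (-b)}" by blast
  then obtain e where e: "e > 0" and be: "ball x0 e \<subseteq> {x. trop_dist x (-a) = trop_dist x (-b)}"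
    by (auto simp: mem_interior)
  obtain x1 \<rho>1 p q where r1: "\<rho>1 > 0" "p \<noteq> q" "ball x1 \<rho>1 \<subseteq> ball x0 e"
     "\<forall>y\<in>ball x1 \<rho>1. trop_dist y (- a) = (y$p + a$p) - (y$q + a$q)"
    using perturb[OF e card, of x0 a] by blast
  obtain x2 \<rho>2 r s where r2: "\<rho>2 > 0" "r \<noteq> s" "ball x2 \<rho>2 \<subseteq> ball x1 \<rho>1"
     "\<forall>y\<in>ball x2 \<rho>2. trop_dist y (- b) = (y$r + b$r) - (y$s + b$s)"
    using perturb[OF r1(1) card, of x1 b] by blast
  have E: "(y$p + a$p) - (y$q + a$q) = (y$r + b$r) - (y$s + b$s)" if "y \<in> ball x2 \<rho>2" for y
  proof -
    have y1: "y \<in> ball x1 \<rho>1" using that r2(3) by blast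
    have "y \<in> ball x0 e" using y1 r1(3) by blast
    then have "trop_dist y (-a) = trop_dist y (-b)" using be by blast
    then show ?thesis using r1(4) y1 r2(4) that by simp
  qed
  have x2b: "x2 \<in> ball x2 \<rho>2" using r2 by simp
  show False
  proof (cases "p = r \<and> q = s")
    case True
    have "a$p - a$q = b$p - b$q" using E[OF x2b] True by (simp add: algebra_simps)
    then show False using wgp r1(2) unfolding weak_general_position_def by blast
  next
    case False
    define k where "k = (if p \<noteq> r then p else q)"
    define t where "t = \<rho>2 / 2"
    have t: "t > 0" using r2 by (simp add: t_def)
    define y where "y = x2 + axis k t"
    have "dist x2 y = t" using t by (simp add: y_def dist_norm norm_axis_real)
    then have yb: "y \<in> ball x2 \<rho>2" using r2 by (simp add: t_def)
    have yc: "y$m = x2$m + (if m = k then t else 0)" for m by (simp add: y_def axis_def)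
    show False
    proof (cases "p \<noteq> r")
      case True
      then have k: "k = p" by (simp add: k_def)
      have c1: "y$p = x2$p + t" using yc[of p] k by simp
      have c2: "y$q = x2$q" using yc[of q] k r1(2) by simp
      have c3: "y$r = x2$r" using yc[of r] k True by simp
      have c4: "y$s = x2$s + (if s = p then t else 0)" using yc[of s] k by simp
      show False
      proof (cases "s = p")
        case True
        then show False using E[OF x2b] E[OF yb] c1 c2 c3 c4 t by simp
      next
        case False
        then show False using E[OF x2b] E[OF yb] c1 c2 c3 c4 t by simp
      qed
    next
      case nr: False
      then have k: "k = q" "q \<noteq> s" "p = r" using False by (auto simp: k_def)
      have c1: "y$p = x2$p" using yc[of p] k r1(2) by simp
      have c2: "y$q = x2$q + t" using yc[of q] k by simp
      have c3: "y$r = x2$r" using yc[of r] k r1(2) by simp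
      have c4: "y$s = x2$s" using yc[of s] k by simp
      show False using E[OF x2b] E[OF yb] c1 c2 c3 c4 t by simp
    qed
  qed
qed

lemma finite_union_interior:
  assumes "finite I" "\<And>i. i \<in> I \<Longrightarrow> closed (S i)" "\<And>i. i \<in> I \<Longrightarrow> interior (S i) = {}"
  shows "interior (\<Union>i\<in>I. S i) = {}"
  using assms
proof (induction I rule: finite_induct)
  case empty then show ?case by simp
next
  case (insert i I)
  have "interior (S i \<union> (\<Union>i\<in>I. S i)) = interior (S i)"
    by (rule interior_closed_Un_empty_interior) (use insert in auto)
  then show ?case using insert by simp
qed


lemma gap_helper:
  fixes g :: "'d \<Rightarrow> real"
  assumes pq: "p \<noteq> q" and N: "N \<ge> 0" and L: "L = 2 * N + 2"
    and b: "\<And>k. \<bar>g k - ((if k = p then L else 0) - (if k = q then L else 0))\<bar> < 1 + N"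
  shows "g k \<le> g p" "g q \<le> g k"
proof -
  have bp: "g p > L - 1 - N" using b[of p] pq by simp
  have bq: "g q < - L + 1 + N" using b[of q] pq by simp
  have bk: "\<bar>g k\<bar> < 1 + N" if "k \<noteq> p" "k \<noteq> q" for k using b[of k] that by simp
  show "g k \<le> g p"
    using bp bq bk[of k] L N by (cases "k = p"; cases "k = q") auto
  show "g q \<le> g k"
    using bp bq bk[of k] L N by (cases "k = p"; cases "k = q") auto
qed

lemma nonwgp_interior:
  fixes a b :: "real ^ 'd"
  assumes pq: "p \<noteq> q" and eq: "a$p - a$q = b$p - b$q"
  shows "interior {x. trop_dist x (-a) = trop_dist x (-b)} \<noteq> {}"
proof -
  define N where "N = norm a + norm b"
  have N: "N \<ge> 0" by (simp add: N_def)
  define L where "L = 2 * N + 2"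
  define x0 where "x0 = axis p L - axis q L - a"
  have x0c: "x0$k = (if k = p then L else 0) - (if k = q then L else 0) - a$k" for k
    by (simp add: x0_def axis_def)
  have "ball x0 1 \<subseteq> {x. trop_dist x (-a) = trop_dist x (-b)}"
  proof
    fix y assume y: "y \<in> ball x0 1"
    have yb: "\<bar>y$k - x0$k\<bar> < 1" for k
      using comp_dist[of y k x0] y by (simp add: dist_commute)
    have na: "\<bar>a$k\<bar> \<le> norm a" for k by (rule component_le_norm_cart)
    have nb: "\<bar>b$k\<bar> \<le> norm b" for k by (rule component_le_norm_cart)
    have ga: "\<bar>(y$k + a$k) - ((if k = p then L else 0) - (if k = q then L else 0))\<bar> < 1 + N" for k
      using yb[of k] x0c[of k] N by simp
    have gb: "\<bar>(y$k + b$k) - ((if k = p then L else 0) - (if k = q then L else 0))\<bar> < 1 + N" for k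
      using yb[of k] x0c[of k] na[of k] nb[of k] unfolding N_def by simp
    note A = gap_helper[OF pq N L_def ga]
    note B = gap_helper[OF pq N L_def gb]
    have "trop_dist y (-a) = (y$p + a$p) - (y$q + a$q)"
      using trop_dist_eq[of y "-a" p q] A by simp
    moreover have "trop_dist y (-b) = (y$p + b$p) - (y$q + b$q)"
      using trop_dist_eq[of y "-b" p q] B by simp
    ultimately show "y \<in> {x. trop_dist x (-a) = trop_dist x (-b)}" using eq by simp
  qed
  then have "x0 \<in> interior {x. trop_dist x (-a) = trop_dist x (-b)}"
    by (meson centre_in_ball interior_maximal open_ball zero_less_one subsetD)
  then show ?thesis by blast
qed

theorem mainTheorem2:
  fixes k1 k2 :: nat and w1 w2 :: "nat \<Rightarrow> real ^ 'd"
  assumes "CARD('d) \<ge> 2" and "k1 \<ge> 1" and "k2 \<ge> 1"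
  shows "interior (bisector_set k1 k2 w1 w2) = {} \<longleftrightarrow>
    (\<forall>i\<in>{1..k1}. \<forall>j\<in>{1..k2}. weak_general_position (w1 i) (w2 j))"
proof -
  define Z where "Z = (\<lambda>(i,j). {x::real^'d. trop_dist x (- w1 i) = trop_dist x (- w2 j)})"
  have Beq: "bisector_set k1 k2 w1 w2 = (\<Union>ij\<in>{1..k1}\<times>{1..k2}. Z ij)"
    unfolding bisector_set_def Z_def by auto
  show ?thesis
  proof
    assume int: "interior (bisector_set k1 k2 w1 w2) = {}"
    show "\<forall>i\<in>{1..k1}. \<forall>j\<in>{1..k2}. weak_general_position (w1 i) (w2 j)"
    proof (intro ballI, rule ccontr)
      fix i j assume i: "i \<in> {1..k1}" and j: "j \<in> {1..k2}"
        and n: "\<not> weak_general_position (w1 i) (w2 j)"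
      then obtain p q where "p \<noteq> q" "w1 i $ p - w1 i $ q = w2 j $ p - w2 j $ q"
        unfolding weak_general_position_def by blast
      then have ne: "interior (Z (i,j)) \<noteq> {}" unfolding Z_def using nonwgp_interior by simp
      have "Z (i,j) \<subseteq> bisector_set k1 k2 w1 w2" unfolding Beq using i j by blast
      then have "interior (Z (i,j)) \<subseteq> interior (bisector_set k1 k2 w1 w2)" by (rule interior_mono)
      then show False using ne int by blast
    qed
  next
    assume all: "\<forall>i\<in>{1..k1}. \<forall>j\<in>{1..k2}. weak_general_position (w1 i) (w2 j)"
    have "interior (\<Union>ij\<in>{1..k1}\<times>{1..k2}. Z ij) = {}"
    proof (rule finite_union_interior)
      show "finite ({1..k1}\<times>{1..k2})" by simp
      fix ij assume "ij \<in> {1..k1}\<times>{1..k2}"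
      then obtain i j where ij: "ij = (i,j)" "i \<in> {1..k1}" "j \<in> {1..k2}" by blast
      show "closed (Z ij)" unfolding ij Z_def
        by (simp add: closed_Collect_eq trop_dist_cont)
      show "interior (Z ij) = {}" unfolding ij Z_def
        using pair_interior[OF assms(1)] all ij by simp
    qed
    then show "interior (bisector_set k1 k2 w1 w2) = {}" using Beq by simp
  qed
qed

end
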